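(* For all $s,t\in\Lambda^\infty$: if $s$ has no head normal form and $t\to^\infty_{\beta\bot}s$, then $t$ has no head normal form.
   Context: Fix an infinite set $V$ of variables and a set $C$ of constants with $V\cap C=\emptyset$, containing a distinguished constant $\bot$. $\Lambda^\infty$ is the set of infinitary lambda-terms: all finite and infinite terms generated coinductively by $t ::= c\mid x\mid t\,t\mid\lambda x.t$, identified up to $\alpha$-equivalence; $s[t/x]$ is capture-avoiding substitution; $\equiv$ is identity; an atom is a variable or constant. For $R\subseteq\Lambda^\infty\times\Lambda^\infty$, the compatible closure $\to_R$ is the least relation with $(s,t)\in R\Rightarrow s\to_R t$ and $s\to_R s'\Rightarrow st\to_R s't,\ ts\to_R ts',\ \lambda x.s\to_R\lambda x.s'$. $\to_\beta$ is the compatible closure of $R_\beta=\{((\lambda x.s)t,s[t/x])\}$. A term is in head normal form (hnf) if it is $\lambda x_1\ldots x_m.\,a\,t_1\ldots t_n$ ($m,n\ge0$, $a$ an atom, $a\not\equiv\bot$); $t$ has a hnf if $t\to^*_\beta t'$ for some $t'$ in hnf. $R_\bot=\{(t,\bot)\mid t\text{ has no hnf}, t\not\equiv\bot\}$; $\to_{\beta\bot}$ is the compatible closure of $R_\beta\cup R_\bot$. The infinitary closure $\to^\infty_{\beta\bot}$ is the greatest relation such that whenever $s\to^\infty_{\beta\bot}t$ (writing $\to^*$ for the reflexive-transitive closure of $\to_{\beta\bot}$): $t\equiv a$ atom and $s\to^*a$; or $t\equiv t_1't_2'$, $s\to^*t_1t_2$, $t_i\to^\infty_{\beta\bot}t_i'$;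 or $t\equiv\lambda x.r'$, $s\to^*\lambda x.r$, $r\to^\infty_{\beta\bot}r'$. *)

theory Defs
  imports Main
begin

text \<open>Infinitary lambda terms, represented coinductively with de Bruijn indices
  (so that alpha-equivalent terms are identical).\<close>

codatatype 'c lterm =
    Var nat
  | Const 'c
  | Bot
  | App "'c lterm" "'c lterm"
  | Lam "'c lterm"

primcorec lift :: "nat \<Rightarrow> 'c lterm \<Rightarrow> 'c lterm" where
  "lift k t = (case t of
      Var n \<Rightarrow> Var (if n < k then n else Suc n)
    | Const c \<Rightarrow> Const c
    | Bot \<Rightarrow> Bot
    | App t1 t2 \<Rightarrow> App (lift k t1) (lift k t2)
    | Lam r \<Rightarrow> Lam (lift (Suc k) r))"

text \<open>Capture-avoiding substitution: subst k u t replaces index k in t by u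
  (u already shifted to the binding depth), decrementing larger free indices.\<close>
primcorec subst :: "nat \<Rightarrow> 'c lterm \<Rightarrow> 'c lterm \<Rightarrow> 'c lterm" where
  "subst k u t = (case t of
      Var n \<Rightarrow> (if n = k then u else if k < n then Var (n - 1) else Var n)
    | Const c \<Rightarrow> Const c
    | Bot \<Rightarrow> Bot
    | App t1 t2 \<Rightarrow> App (subst k u t1) (subst k u t2)
    | Lam r \<Rightarrow> Lam (subst (Suc k) (lift 0 u) r))"

definition subst0 :: "'c lterm \<Rightarrow> 'c lterm \<Rightarrow> 'c lterm" where
  "subst0 s t = subst 0 t s"

inductive compat :: "('c lterm \<Rightarrow> 'c lterm \<Rightarrow> bool) \<Rightarrow> 'c lterm \<Rightarrow> 'c lterm \<Rightarrow> bool"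
  for R where
  base: "R s t \<Longrightarrow> compat R s t"
| appL: "compat R s s' \<Longrightarrow> compat R (App s t) (App s' t)"
| appR: "compat R s s' \<Longrightarrow> compat R (App t s) (App t s')"
| lam:  "compat R s s' \<Longrightarrow> compat R (Lam s) (Lam s')"

inductive R_beta :: "'c lterm \<Rightarrow> 'c lterm \<Rightarrow> bool" where
  "R_beta (App (Lam s) t) (subst0 s t)"

definition beta_step :: "'c lterm \<Rightarrow> 'c lterm \<Rightarrow> bool" where
  "beta_step = compat R_beta"

inductive hnf_body :: "'c lterm \<Rightarrow> bool" where
  "hnf_body (Var x)"
| "hnf_body (Const c)"
| "hnf_body t \<Longrightarrow> hnf_body (App t s)"

inductive is_hnf :: "'c lterm \<Rightarrow> bool" where
  "hnf_body t \<Longrightarrow> is_hnf t"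
| "is_hnf t \<Longrightarrow> is_hnf (Lam t)"

definition has_hnf :: "'c lterm \<Rightarrow> bool" where
  "has_hnf t \<longleftrightarrow> (\<exists>t'. beta_step\<^sup>*\<^sup>* t t' \<and> is_hnf t')"

inductive R_bot :: "'c lterm \<Rightarrow> 'c lterm \<Rightarrow> bool" where
  "\<not> has_hnf t \<Longrightarrow> t \<noteq> Bot \<Longrightarrow> R_bot t Bot"

definition beta_bot_step :: "'c lterm \<Rightarrow> 'c lterm \<Rightarrow> bool" where
  "beta_bot_step = compat (\<lambda>s t. R_beta s t \<or> R_bot s t)"

definition is_atom :: "'c lterm \<Rightarrow> bool" where
  "is_atom t \<longleftrightarrow> (\<exists>x. t = Var x) \<or> (\<exists>c. t = Const c) \<or> t = Bot"

coinductive inf_bb :: "'c lterm \<Rightarrow> 'c lterm \<Rightarrow> bool" where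
  atom: "is_atom a \<Longrightarrow> beta_bot_step\<^sup>*\<^sup>* s a \<Longrightarrow> inf_bb s a"
| app: "beta_bot_step\<^sup>*\<^sup>* s (App t1 t2) \<Longrightarrow> inf_bb t1 t1' \<Longrightarrow> inf_bb t2 t2'
        \<Longrightarrow> inf_bb s (App t1' t2')"
| lam: "beta_bot_step\<^sup>*\<^sup>* s (Lam r) \<Longrightarrow> inf_bb r r' \<Longrightarrow> inf_bb s (Lam r')"

end

theory Submission
  imports Defs "HOL-Library.Multiset"
begin

lemma lift_Var[simp]: "lift k (Var n) = Var (if n < k then n else Suc n)" by (subst lift.code) simp
lemma lift_Const[simp]: "lift k (Const c) = Const c" by (subst lift.code) simp
lemma lift_Bot[simp]: "lift k Bot = Bot" by (subst lift.code) simp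
lemma lift_App[simp]: "lift k (App a b) = App (lift k a) (lift k b)" by (subst lift.code) simp
lemma lift_Lam[simp]: "lift k (Lam a) = Lam (lift (Suc k) a)" by (subst lift.code) simp

lemma subst_Var[simp]: "subst k u (Var n) = (if n = k then u else if k < n then Var (n - 1) else Var n)"
  by (subst subst.code) simp
lemma subst_Const[simp]: "subst k u (Const c) = Const c" by (subst subst.code) simp
lemma subst_Bot[simp]: "subst k u Bot = Bot" by (subst subst.code) simp
lemma subst_App[simp]: "subst k u (App a b) = App (subst k u a) (subst k u b)" by (subst subst.code) simp
lemma subst_Lam[simp]: "subst k u (Lam a) = Lam (subst (Suc k) (lift 0 u) a)" by (subst subst.code) simp

datatype ty = O | Arr "ty multiset" ty

type_synonym ctx = "nat \<Rightarrow> ty multiset"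
definition czero :: ctx where "czero = (\<lambda>_. {#})"
definition cadd :: "ctx \<Rightarrow> ctx \<Rightarrow> ctx" where "cadd G D = (\<lambda>i. G i + D i)"
definition csing :: "nat \<Rightarrow> ty \<Rightarrow> ctx" where "csing x s = (\<lambda>i. if i = x then {#s#} else {#})"
definition ctail :: "ctx \<Rightarrow> ctx" where "ctail G = (\<lambda>i. G (Suc i))"
definition cins :: "nat \<Rightarrow> ctx \<Rightarrow> ctx" where
  "cins j G = (\<lambda>i. if i < j then G i else if i = j then {#} else G (i - 1))"
definition crem :: "nat \<Rightarrow> ctx \<Rightarrow> ctx" where
  "crem j G = (\<lambda>i. if i < j then G i else G (Suc i))"

lemmas cdefs = czero_def cadd_def csing_def ctail_def cins_def crem_def

inductive tj :: "ctx \<Rightarrow> 'c lterm \<Rightarrow> ty \<Rightarrow> nat \<Rightarrow> bool"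
  and tjs :: "ctx \<Rightarrow> 'c lterm \<Rightarrow> ty multiset \<Rightarrow> nat \<Rightarrow> bool" where
  tVar: "tj (csing x s) (Var x) s (Suc 0)"
| tConst: "tj czero (Const c) s (Suc 0)"
| tLam: "tj G p s n \<Longrightarrow> tj (ctail G) (Lam p) (Arr (G 0) s) (Suc n)"
| tApp: "tj G r (Arr N s) n \<Longrightarrow> tjs D u N m \<Longrightarrow> tj (cadd G D) (App r u) s (Suc (n + m))"
| sNil: "tjs czero u {#} 0"
| sCons: "tj G u t n \<Longrightarrow> tjs D u N m \<Longrightarrow> tjs (cadd G D) u (add_mset t N) (n + m)"

inductive_cases tjVarE: "tj G (Var x) s n"
inductive_cases tjConstE: "tj G (Const c) s n"
inductive_cases tjBotE: "tj G Bot s n"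
inductive_cases tjLamE: "tj G (Lam p) s n"
inductive_cases tjAppE: "tj G (App r u) s n"

lemma tjs_empty: "tjs D u {#} m \<Longrightarrow> D = czero \<and> m = 0"
  by (cases rule: tjs.cases) auto

lemma cadd_czero[simp]: "cadd G czero = G" "cadd czero G = G"
  by (auto simp: cdefs)

lemma tjs_single: "tj G u s n \<Longrightarrow> tjs G u {#s#} n"
  using sCons[OF _ sNil, of G u s n] by simp

lemma tjs_singleD: "tjs G u {#s#} n \<Longrightarrow> tj G u s n"
  by (erule tjs.cases) (auto dest!: tjs_empty)

lemma tjs_join: "tjs D1 u M1 m1 \<Longrightarrow> tjs D2 u M2 m2 \<Longrightarrow> tjs (cadd D1 D2) u (M1 + M2) (m1 + m2)"
proof (induction D1 u M1 m1 rule: tj_tjs.inducts(2)[where ?P1.0="\<lambda>_ _ _ _. True"])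
  case (sNil u) then show ?case by simp
next
  case (sCons G u t n D N m)
  have "tjs (cadd G (cadd D D2)) u (add_mset t (N + M2)) (n + (m + m2))"
    using sCons by (intro tj_tjs.sCons) auto
  moreover have "cadd G (cadd D D2) = cadd (cadd G D) D2" by (auto simp: cdefs add.assoc)
  ultimately show ?case by (simp add: add.assoc)
qed auto

lemma tjs_split: "tjs D u M m \<Longrightarrow> M = M1 + M2 \<Longrightarrow>
   \<exists>D1 D2 m1 m2. D = cadd D1 D2 \<and> m = m1 + m2 \<and> tjs D1 u M1 m1 \<and> tjs D2 u M2 m2"
proof (induction D u M m arbitrary: M1 M2 rule: tj_tjs.inducts(2)[where ?P1.0="\<lambda>_ _ _ _. True"])
  case (sNil u)
  then show ?case by (intro exI[of _ czero]) (auto intro: tj_tjs.sNil)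
next
  case (sCons G u t n D N m)
  show ?case
  proof (cases "t \<in># M1")
    case True
    then obtain M1' where M1: "M1 = add_mset t M1'" by (metis multi_member_split)
    with sCons.prems have "N = M1' + M2" by simp
    from sCons.IH[OF this] obtain D1 D2 m1 m2 where
      h: "D = cadd D1 D2" "m = m1 + m2" "tjs D1 u M1' m1" "tjs D2 u M2 m2" by blast
    have a: "tjs (cadd G D1) u M1 (n + m1)" unfolding M1 by (rule tj_tjs.sCons) (use h sCons.hyps(1) in auto)
    have b: "cadd G D = cadd (cadd G D1) D2" using h by (auto simp: cdefs add.assoc)
    show ?thesis
      by (rule exI[of _ "cadd G D1"], rule exI[of _ D2], rule exI[of _ "n+m1"], rule exI[of _ m2])
         (use a b h(2,4) in simp)
  next
    case False
    have "t \<in># M1 + M2" unfolding sCons.prems[symmetric] by simp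
    with False have "t \<in># M2" by simp
    then obtain M2' where M2: "M2 = add_mset t M2'" by (metis multi_member_split)
    with sCons.prems have "N = M1 + M2'" by simp
    from sCons.IH[OF this] obtain D1 D2 m1 m2 where
      h: "D = cadd D1 D2" "m = m1 + m2" "tjs D1 u M1 m1" "tjs D2 u M2' m2" by blast
    have a: "tjs (cadd G D2) u M2 (n + m2)" unfolding M2 by (rule tj_tjs.sCons) (use h sCons.hyps(1) in auto)
    have b: "cadd G D = cadd D1 (cadd G D2)" using h by (auto simp: cdefs add_ac)
    show ?thesis
      by (rule exI[of _ D1], rule exI[of _ "cadd G D2"], rule exI[of _ m1], rule exI[of _ "n+m2"])
         (use a b h(2,3) in simp)
  qed
qed auto

lemma ctx_lemmas[simp]:
  "ctail (cins (Suc j) G) = cins j (ctail G)"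
  "cins (Suc j) G 0 = G 0"
  "cins j (cadd G D) = cadd (cins j G) (cins j D)"
  "cins j czero = czero"
  "cins j (csing x s) = csing (if x < j then x else Suc x) s"
  "ctail (cadd G D) = cadd (ctail G) (ctail D)"
  "crem j (cadd G D) = cadd (crem j G) (crem j D)"
  "crem j czero = czero"
  "ctail (crem (Suc j) G) = crem j (ctail G)"
  "crem (Suc j) G 0 = G 0"
  "ctail (cins 0 D) = D"
  "cins 0 D 0 = {#}"
  "crem 0 G = ctail G"
  by (auto simp: cdefs fun_eq_iff)

lemma ctx_app: "ctail G j = G (Suc j)" "czero j = {#}" "cadd G D j = G j + D j"
  by (auto simp: cdefs)

lemma crem_csing: "x \<noteq> j \<Longrightarrow> crem j (csing x s) = csing (if j < x then x - 1 else x) s"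
  by (auto simp: cdefs fun_eq_iff)
lemma crem_csing_same[simp]: "crem j (csing j s) = czero"
  by (auto simp: cdefs fun_eq_iff)
lemma csing_app: "csing x s j = (if j = x then {#s#} else {#})"
  by (auto simp: cdefs)

lemma cadd_assoc: "cadd (cadd a b) c = cadd a (cadd b c)" by (auto simp: cdefs add.assoc)
lemma cadd_comm: "cadd a b = cadd b a" by (auto simp: cdefs add.commute)
lemma cadd_lcomm: "cadd a (cadd b c) = cadd b (cadd a c)" by (auto simp: cdefs add_ac)

lemma tLam': "tj G p s n \<Longrightarrow> G' = ctail G \<Longrightarrow> t = Arr (G 0) s \<Longrightarrow> n' = Suc n \<Longrightarrow> tj G' (Lam p) t n'"
  using tLam by blast
lemma tApp': "tj G r (Arr N s) n \<Longrightarrow> tjs D u N m \<Longrightarrow> G' = cadd G D \<Longrightarrow> n' = Suc (n + m) \<Longrightarrow> tj G' (App r u) s n'"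
  using tApp by blast
lemma sCons': "tj G u t n \<Longrightarrow> tjs D u N m \<Longrightarrow> G' = cadd G D \<Longrightarrow> n' = n + m \<Longrightarrow> tjs G' u (add_mset t N) n'"
  using sCons by blast
lemma tVar': "G = csing x s \<Longrightarrow> n = Suc 0 \<Longrightarrow> tj G (Var x) s n"
  using tVar by blast

lemma lift_tj:
  shows "tj G p s n \<Longrightarrow> tj (cins j G) (lift j p) s n"
    and "tjs G p N n \<Longrightarrow> tjs (cins j G) (lift j p) N n"
proof (induction arbitrary: j and j rule: tj_tjs.inducts)
  case (tVar x s) then show ?case by (auto intro: tVar')
next
  case (tConst c s) then show ?case by (auto intro: tj_tjs.tConst)
next
  case (tLam G p s n) then show ?case by (auto intro!: tLam'[OF tLam.IH[of "Suc j"]])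
next
  case (tApp G r N s n D u m) then show ?case by (auto intro!: tApp')
next
  case (sNil u) then show ?case by (auto intro: tj_tjs.sNil)
next
  case (sCons G u t n D N m) then show ?case by (auto intro!: sCons')
qed

lemma subst_tj:
  shows "tj G p s n \<Longrightarrow> tjs D u (G j) m \<Longrightarrow> \<exists>n'. n' \<le> n + m \<and> tj (cadd (crem j G) D) (subst j u p) s n'"
    and "tjs G p N n \<Longrightarrow> tjs D u (G j) m \<Longrightarrow> \<exists>n'. n' \<le> n + m \<and> tjs (cadd (crem j G) D) (subst j u p) N n'"
proof (induction arbitrary: j u D m and j u D m rule: tj_tjs.inducts)
  case (tVar x s)
  show ?case
  proof (cases "x = j")
    case True
    then have "tj D u s m" using tVar.prems by (auto simp: csing_app dest: tjs_singleD)
    then show ?thesis using True by (intro exI[of _ m]) auto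
  next
    case False
    then have "D = czero" "m = 0" using tVar.prems tjs_empty by (auto simp: csing_app)
    then show ?thesis using False by (auto simp: crem_csing intro!: tVar')
  qed
next
  case (tConst c s)
  then have "D = czero" "m = 0" using tjs_empty by (auto simp: ctx_app)
  then show ?case by (auto intro: tj_tjs.tConst)
next
  case (tLam G p s n)
  have "tjs (cins 0 D) (lift 0 u) (G (Suc j)) m" using lift_tj(2) tLam.prems by (fastforce simp: ctx_app)
  from tLam.IH[OF this] obtain n' where h: "n' \<le> n + m"
    "tj (cadd (crem (Suc j) G) (cins 0 D)) (subst (Suc j) (lift 0 u) p) s n'" by blast
  have e: "cadd (crem (Suc j) G) (cins 0 D) 0 = G 0" by (simp add: cdefs)
  show ?case
    by (rule exI[of _ "Suc n'"]) (auto simp: e h(1) intro!: tLam'[OF h(2)])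
next
  case (tApp G r N s n D' u' m')
  have "tjs D u (G j + D' j) m" using tApp.prems by (simp add: cadd_def)
  from tjs_split[OF this refl] obtain D1 D2 m1 m2 where sp: "D = cadd D1 D2" "m = m1 + m2"
    "tjs D1 u (G j) m1" "tjs D2 u (D' j) m2" by blast
  from tApp.IH(1)[OF sp(3)] tApp.IH(2)[OF sp(4)] obtain n1 n2 where
    h: "n1 \<le> n + m1" "tj (cadd (crem j G) D1) (subst j u r) (Arr N s) n1"
       "n2 \<le> m' + m2" "tjs (cadd (crem j D') D2) (subst j u u') N n2" by blast
  show ?case
    by (rule exI[of _ "Suc (n1 + n2)"]) (use h sp in \<open>auto simp: cadd_assoc cadd_lcomm intro!: tApp'\<close>)
next
  case (sNil u')
  then have "D = czero" "m = 0" using tjs_empty by (auto simp: ctx_app)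
  then show ?case by (auto intro: tj_tjs.sNil)
next
  case (sCons G u' t n D' N m')
  have "tjs D u (G j + D' j) m" using sCons.prems by (simp add: cadd_def)
  from tjs_split[OF this refl] obtain D1 D2 m1 m2 where sp: "D = cadd D1 D2" "m = m1 + m2"
    "tjs D1 u (G j) m1" "tjs D2 u (D' j) m2" by blast
  from sCons.IH(1)[OF sp(3)] sCons.IH(2)[OF sp(4)] obtain n1 n2 where
    h: "n1 \<le> n + m1" "tj (cadd (crem j G) D1) (subst j u u') t n1"
       "n2 \<le> m' + m2" "tjs (cadd (crem j D') D2) (subst j u u') N n2" by blast
  show ?case
    by (rule exI[of _ "n1 + n2"]) (use h sp in \<open>auto simp: cadd_assoc cadd_lcomm intro!: sCons'\<close>)
qed

lemma lift_eq_iffs: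
  "Var x = lift j u \<longleftrightarrow> (\<exists>i. u = Var i \<and> x = (if i < j then i else Suc i))"
  "Const c = lift j u \<longleftrightarrow> u = Const c"
  "Lam p = lift j u \<longleftrightarrow> (\<exists>r. u = Lam r \<and> p = lift (Suc j) r)"
  "App a b = lift j u \<longleftrightarrow> (\<exists>r1 r2. u = App r1 r2 \<and> a = lift j r1 \<and> b = lift j r2)"
  by (cases u; auto)+

lemma unlift_tj:
  shows "tj G' x s n \<Longrightarrow> x = lift j u \<Longrightarrow> \<exists>G. G' = cins j G \<and> tj G u s n"
    and "tjs G' x N n \<Longrightarrow> x = lift j u \<Longrightarrow> \<exists>G. G' = cins j G \<and> tjs G u N n"
proof (induction arbitrary: j u and j u rule: tj_tjs.inducts)
  case (tVar x s)
  then obtain i where "u = Var i" "x = (if i < j then i else Suc i)" by (auto simp: lift_eq_iffs)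
  then show ?case by (intro exI[of _ "csing i s"]) (auto intro: tj_tjs.tVar)
next
  case (tConst c s)
  then show ?case by (intro exI[of _ czero]) (auto simp: lift_eq_iffs intro: tj_tjs.tConst)
next
  case (tLam G p s n)
  then obtain r where r: "u = Lam r" "p = lift (Suc j) r" by (auto simp: lift_eq_iffs)
  from tLam.IH[OF r(2)] obtain G0 where h: "G = cins (Suc j) G0" "tj G0 r s n" by blast
  have e: "G 0 = G0 0" using h(1) by (simp add: cdefs)
  show ?case by (rule exI[of _ "ctail G0"]) (use h r e in \<open>auto intro!: tLam'\<close>)
next
  case (tApp G r N s n D u' m)
  then obtain r1 r2 where r: "u = App r1 r2" "r = lift j r1" "u' = lift j r2" by (auto simp: lift_eq_iffs)
  from tApp.IH(1)[OF r(2)] tApp.IH(2)[OF r(3)] obtain G0 D0 where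
    h: "G = cins j G0" "tj G0 r1 (Arr N s) n" "D = cins j D0" "tjs D0 r2 N m" by blast
  show ?case by (rule exI[of _ "cadd G0 D0"]) (use h r in \<open>auto intro!: tApp'\<close>)
next
  case (sNil u')
  then show ?case by (intro exI[of _ czero]) (auto intro: tj_tjs.sNil)
next
  case (sCons G u' t n D N m)
  from sCons.IH(1)[OF sCons.prems] sCons.IH(2)[OF sCons.prems] obtain G0 D0 where
    h: "G = cins j G0" "tj G0 u t n" "D = cins j D0" "tjs D0 u N m" by blast
  show ?case by (rule exI[of _ "cadd G0 D0"]) (use h in \<open>auto intro!: sCons'\<close>)
qed

lemma subst_eq_iffs:
  "p \<noteq> Var j \<Longrightarrow> Var y = subst j u p \<longleftrightarrow> (\<exists>i. p = Var i \<and> i \<noteq> j \<and> y = (if j < i then i - 1 else i))"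
  "p \<noteq> Var j \<Longrightarrow> Const c = subst j u p \<longleftrightarrow> p = Const c"
  "p \<noteq> Var j \<Longrightarrow> Lam q = subst j u p \<longleftrightarrow> (\<exists>r. p = Lam r \<and> q = subst (Suc j) (lift 0 u) r)"
  "p \<noteq> Var j \<Longrightarrow> App a b = subst j u p \<longleftrightarrow> (\<exists>r1 r2. p = App r1 r2 \<and> a = subst j u r1 \<and> b = subst j u r2)"
  by (cases p; auto)+

lemma unsubst_var:
  assumes "tj G' u s n"
  shows "\<exists>G D n1 m. G' = cadd (crem j G) D \<and> tj G (Var j) s n1 \<and> tjs D u (G j) m"
  apply (rule exI[of _ "csing j s"], rule exI[of _ G'], rule exI[of _ "Suc 0"], rule exI[of _ n])
  using tjs_single[OF assms] by (auto simp: csing_app intro: tj_tjs.tVar)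

lemma unsubst_tj:
  shows "tj G' x s n \<Longrightarrow> x = subst j u p \<Longrightarrow>
      \<exists>G D n1 m. G' = cadd (crem j G) D \<and> tj G p s n1 \<and> tjs D u (G j) m"
    and "tjs G' x N n \<Longrightarrow> x = subst j u p \<Longrightarrow>
      \<exists>G D n1 m. G' = cadd (crem j G) D \<and> tjs G p N n1 \<and> tjs D u (G j) m"
proof (induction arbitrary: j u p and j u p rule: tj_tjs.inducts)
  case (tVar x s)
  show ?case
  proof (cases "p = Var j")
    case True
    then show ?thesis using unsubst_var[OF tj_tjs.tVar] tVar by auto
  next
    case False
    then obtain i where i: "p = Var i" "i \<noteq> j" "x = (if j < i then i - 1 else i)"
      using tVar by (auto simp: subst_eq_iffs)
    have e: "csing i s j = {#}" using i by (simp add: csing_def)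
    have e2: "crem j (csing i s) = csing x s" using i crem_csing by auto
    show ?thesis
      apply (rule exI[of _ "csing i s"], rule exI[of _ czero], rule exI[of _ "Suc 0"], rule exI[of _ 0])
      using i e e2 by (auto intro: tj_tjs.tVar tj_tjs.sNil)
  qed
next
  case (tConst c s)
  show ?case
  proof (cases "p = Var j")
    case True
    then show ?thesis using unsubst_var[OF tj_tjs.tConst] tConst by auto
  next
    case False
    then have "p = Const c" using tConst by (auto simp: subst_eq_iffs)
    have e: "czero j = {#}" by (simp add: czero_def)
    show ?thesis
      apply (rule exI[of _ czero], rule exI[of _ czero], rule exI[of _ "Suc 0"], rule exI[of _ 0])
      using e \<open>p = Const c\<close> by (auto intro: tj_tjs.tConst tj_tjs.sNil)
  qed
next
  case (tLam G q s n)
  show ?case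
  proof (cases "p = Var j")
    case True
    then show ?thesis using unsubst_var[OF tj_tjs.tLam[OF tLam.hyps]] tLam by auto
  next
    case False
    then obtain r where r: "p = Lam r" "q = subst (Suc j) (lift 0 u) r"
      using tLam by (auto simp: subst_eq_iffs)
    from tLam.IH[OF r(2)] obtain G1 D1 n1 m where
      h: "G = cadd (crem (Suc j) G1) D1" "tj G1 r s n1" "tjs D1 (lift 0 u) (G1 (Suc j)) m" by blast
    from unlift_tj(2)[OF h(3) refl] obtain D where d: "D1 = cins 0 D" "tjs D u (G1 (Suc j)) m" by blast
    have e: "G 0 = G1 0" using h(1) d(1) by (simp add: cdefs)
    have e2: "ctail G1 j = G1 (Suc j)" by (simp add: ctail_def)
    show ?thesis
      apply (rule exI[of _ "ctail G1"], rule exI[of _ D], rule exI[of _ "Suc n1"], rule exI[of _ m])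
      using h d e e2 r by (auto intro!: tLam')
  qed
next
  case (tApp G r N s n D u' m)
  show ?case
  proof (cases "p = Var j")
    case True
    then show ?thesis using unsubst_var[OF tj_tjs.tApp[OF tApp.hyps(1) tApp.hyps(2)]] tApp by auto
  next
    case False
    then obtain r1 r2 where r: "p = App r1 r2" "r = subst j u r1" "u' = subst j u r2"
      using tApp by (auto simp: subst_eq_iffs)
    from tApp.IH(1)[OF r(2)] obtain Ga Da na ma where
      ha: "G = cadd (crem j Ga) Da" "tj Ga r1 (Arr N s) na" "tjs Da u (Ga j) ma" by blast
    from tApp.IH(2)[OF r(3)] obtain Gb Db nb mb where
      hb: "D = cadd (crem j Gb) Db" "tjs Gb r2 N nb" "tjs Db u (Gb j) mb" by blast
    have j: "tjs (cadd Da Db) u (cadd Ga Gb j) (ma + mb)"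
      using tjs_join[OF ha(3) hb(3)] by (simp add: cadd_def)
    show ?thesis
      apply (rule exI[of _ "cadd Ga Gb"], rule exI[of _ "cadd Da Db"], rule exI[of _ "Suc (na + nb)"], rule exI[of _ "ma + mb"])
      using ha hb j r by (auto simp: cadd_assoc cadd_lcomm intro!: tApp')
  qed
next
  case (sNil u')
  have e: "czero j = {#}" by (simp add: czero_def)
  show ?case
    by (rule exI[of _ czero], rule exI[of _ czero], rule exI[of _ 0], rule exI[of _ 0])
      (use e in \<open>auto intro: tj_tjs.sNil\<close>)
next
  case (sCons G u' t n D N m)
  from sCons.IH(1)[OF sCons.prems] obtain Ga Da na ma where
    ha: "G = cadd (crem j Ga) Da" "tj Ga p t na" "tjs Da u (Ga j) ma" by blast
  from sCons.IH(2)[OF sCons.prems] obtain Gb Db nb mb where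
    hb: "D = cadd (crem j Gb) Db" "tjs Gb p N nb" "tjs Db u (Gb j) mb" by blast
  have j: "tjs (cadd Da Db) u (cadd Ga Gb j) (ma + mb)"
    using tjs_join[OF ha(3) hb(3)] by (simp add: cadd_def)
  show ?case
    apply (rule exI[of _ "cadd Ga Gb"], rule exI[of _ "cadd Da Db"], rule exI[of _ "na + nb"], rule exI[of _ "ma + mb"])
    using ha hb j by (auto simp: cadd_assoc cadd_lcomm intro!: sCons')
qed

lemma beta_step_lam: "beta_step p p' \<Longrightarrow> beta_step (Lam p) (Lam p')"
  unfolding beta_step_def by (rule compat.lam)
lemma beta_step_appL: "beta_step p p' \<Longrightarrow> beta_step (App p u) (App p' u)"
  unfolding beta_step_def by (rule compat.appL)
lemma beta_step_redex: "beta_step (App (Lam q) u) (subst 0 u q)"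
  unfolding beta_step_def using compat.base[of R_beta, OF R_beta.intros[of q u]] by (simp add: subst0_def)

lemma head_step:
  shows "tj G t s n \<Longrightarrow> is_hnf t \<or> (\<exists>t' n'. beta_step t t' \<and> n' < n \<and> tj G t' s n')"
    and "tjs G t N n \<Longrightarrow> True"
proof (induction rule: tj_tjs.inducts)
  case (tVar x s) then show ?case by (auto intro: is_hnf.intros hnf_body.intros)
next
  case (tConst c s) then show ?case by (auto intro: is_hnf.intros hnf_body.intros)
next
  case (tLam G p s n)
  from tLam.IH show ?case
  proof
    assume "is_hnf p" then show ?thesis by (auto intro: is_hnf.intros)
  next
    assume "\<exists>t' n'. beta_step p t' \<and> n' < n \<and> tj G t' s n'"
    then obtain p' n' where "beta_step p p'" "n' < n" "tj G p' s n'" by blast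
    then show ?thesis by (intro disjI2 exI[of _ "Lam p'"] exI[of _ "Suc n'"]) (auto intro: beta_step_lam tj_tjs.tLam)
  qed
next
  case (tApp G r N s n D u m)
  from tApp.IH(1) show ?case
  proof
    assume h: "is_hnf r"
    show ?thesis
    proof (cases "\<exists>q. r = Lam q")
      case True
      then obtain q where q: "r = Lam q" by blast
      from tApp.hyps(1)[unfolded q] obtain G1 k where g: "G = ctail G1" "N = G1 0" "n = Suc k" "tj G1 q s k"
        by (cases rule: tjLamE) auto
      from subst_tj(1)[OF g(4), of D u 0 m] tApp.hyps(2) g obtain n'' where
        "n'' \<le> k + m" "tj (cadd (crem 0 G1) D) (subst 0 u q) s n''" by auto
      then show ?thesis using g q
        by (intro disjI2 exI[of _ "subst 0 u q"] exI[of _ n'']) (auto intro: beta_step_redex)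
    next
      case False
      with h have "hnf_body r" by (cases rule: is_hnf.cases) auto
      then show ?thesis by (auto intro: is_hnf.intros hnf_body.intros)
    qed
  next
    assume "\<exists>t' n'. beta_step r t' \<and> n' < n \<and> tj G t' (Arr N s) n'"
    then obtain r' n' where "beta_step r r'" "n' < n" "tj G r' (Arr N s) n'" by blast
    then show ?thesis using tApp.hyps(2)
      by (intro disjI2 exI[of _ "App r' u"] exI[of _ "Suc (n' + m)"]) (auto intro: beta_step_appL tj_tjs.tApp)
  qed
qed auto

lemma tj_has_hnf: "tj G t s n \<Longrightarrow> has_hnf t"
proof (induction n arbitrary: t rule: less_induct)
  case (less n)
  from head_step(1)[OF less.prems] show ?case
  proof
    assume "is_hnf t" then show ?thesis unfolding has_hnf_def by blast
  next
    assume "\<exists>t' n'. beta_step t t' \<and> n' < n \<and> tj G t' s n'"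
    then obtain t' n' where "beta_step t t'" "n' < n" "tj G t' s n'" by blast
    with less.IH have "has_hnf t'" "beta_step t t'" by auto
    then show ?thesis unfolding has_hnf_def by (meson converse_rtranclp_into_rtranclp)
  qed
qed

lemma tjs_expand: "tjs D u' N m \<Longrightarrow> (\<forall>G s n. tj G u' s n \<longrightarrow> (\<exists>n'. tj G u s n')) \<Longrightarrow> \<exists>m'. tjs D u N m'"
proof (induction D u' N m rule: tj_tjs.inducts(2)[where ?P1.0="\<lambda>_ _ _ _. True"])
  case (sNil u') then show ?case by (auto intro: tj_tjs.sNil)
next
  case (sCons G u' t n D N m)
  then obtain n' m' where "tj G u t n'" "tjs D u N m'" by blast
  then show ?case by (auto intro: tj_tjs.sCons)
qed auto

lemma tjs_reduce: "tjs D u N m \<Longrightarrow> (\<forall>G s n. tj G u s n \<longrightarrow> (\<exists>n'\<le>n. tj G u' s n')) \<Longrightarrow> \<exists>m'\<le>m. tjs D u' N m'"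
proof (induction D u N m rule: tj_tjs.inducts(2)[where ?P1.0="\<lambda>_ _ _ _. True"])
  case (sNil u) then show ?case by (auto intro: tj_tjs.sNil)
next
  case (sCons G u t n D N m)
  then obtain n' m' where "n' \<le> n" "tj G u' t n'" "m' \<le> m" "tjs D u' N m'" by blast
  then show ?case by (intro exI[of _ "n' + m'"]) (auto intro: tj_tjs.sCons)
qed auto

lemma expand: "beta_step t t' \<Longrightarrow> tj G t' s n \<Longrightarrow> \<exists>n'. tj G t s n'"
  unfolding beta_step_def
proof (induction arbitrary: G s n rule: compat.induct)
  case (base t t')
  then obtain q u where e: "t = App (Lam q) u" "t' = subst 0 u q" by (auto elim: R_beta.cases simp: subst0_def)
  from unsubst_tj(1)[OF base.prems[unfolded e] refl] obtain G1 D n1 m where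
    h: "G = cadd (crem 0 G1) D" "tj G1 q s n1" "tjs D u (G1 0) m" by blast
  show ?case using e h by (auto intro!: tApp'[OF tj_tjs.tLam[OF h(2)] h(3)])
next
  case (appL a a' b)
  from appL.prems obtain G1 D N k m where h: "G = cadd G1 D" "tj G1 a' (Arr N s) k" "tjs D b N m"
    by (cases rule: tjAppE) auto
  from appL.IH[OF h(2)] h show ?case by (auto intro: tj_tjs.tApp)
next
  case (appR a a' b)
  from appR.prems obtain G1 D N k m where h: "G = cadd G1 D" "tj G1 b (Arr N s) k" "tjs D a' N m"
    by (cases rule: tjAppE) auto
  from tjs_expand[OF h(3)] appR.IH obtain m' where "tjs D a N m'" by blast
  with h show ?case by (auto intro: tj_tjs.tApp)
next
  case (lam a a')
  from lam.prems obtain G1 s1 k where h: "G = ctail G1" "s = Arr (G1 0) s1" "tj G1 a' s1 k"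
    by (cases rule: tjLamE) auto
  from lam.IH[OF h(3)] h show ?case by (auto intro: tj_tjs.tLam)
qed

lemma reduce: "beta_bot_step t t' \<Longrightarrow> tj G t s n \<Longrightarrow> \<exists>n'\<le>n. tj G t' s n'"
  unfolding beta_bot_step_def
proof (induction arbitrary: G s n rule: compat.induct)
  case (base t t')
  from base.hyps show ?case
  proof (elim disjE)
    assume "R_beta t t'"
    then obtain q u where e: "t = App (Lam q) u" "t' = subst 0 u q" by (auto elim: R_beta.cases simp: subst0_def)
    from base.prems[unfolded e] obtain G0 D N k m where h: "G = cadd G0 D" "tj G0 (Lam q) (Arr N s) k" "tjs D u N m"
      "n = Suc (k + m)"
      by (cases rule: tjAppE) auto
    from h(2) obtain G1 k' where g: "G0 = ctail G1" "N = G1 0" "k = Suc k'" "tj G1 q s k'"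
      by (cases rule: tjLamE) auto
    from subst_tj(1)[OF g(4), of D u 0 m] h g obtain n'' where
      "n'' \<le> k' + m" "tj (cadd (crem 0 G1) D) (subst 0 u q) s n''" by auto
    then show ?thesis using e h g by (intro exI[of _ n'']) auto
  next
    assume "R_bot t t'"
    then have "\<not> has_hnf t" by (auto elim: R_bot.cases)
    with tj_has_hnf[OF base.prems] show ?thesis by blast
  qed
next
  case (appL a a' b)
  from appL.prems obtain G1 D N k m where h: "G = cadd G1 D" "tj G1 a (Arr N s) k" "tjs D b N m" "n = Suc (k + m)"
    by (cases rule: tjAppE) auto
  from appL.IH[OF h(2)] obtain k' where "k' \<le> k" "tj G1 a' (Arr N s) k'" by blast
  with h show ?case by (intro exI[of _ "Suc (k' + m)"]) (auto intro: tj_tjs.tApp)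
next
  case (appR a a' b)
  from appR.prems obtain G1 D N k m where h: "G = cadd G1 D" "tj G1 b (Arr N s) k" "tjs D a N m" "n = Suc (k + m)"
    by (cases rule: tjAppE) auto
  from tjs_reduce[OF h(3)] appR.IH obtain m' where "m' \<le> m" "tjs D a' N m'" by blast
  with h show ?case by (intro exI[of _ "Suc (k + m')"]) (auto intro: tj_tjs.tApp)
next
  case (lam a a')
  from lam.prems obtain G1 s1 k where h: "G = ctail G1" "s = Arr (G1 0) s1" "tj G1 a s1 k" "n = Suc k"
    by (cases rule: tjLamE) auto
  from lam.IH[OF h(3)] obtain k' where "k' \<le> k" "tj G1 a' s1 k'" by blast
  with h show ?case by (intro exI[of _ "Suc k'"]) (auto intro: tj_tjs.tLam)
qed

lemma reduces: "beta_bot_step\<^sup>*\<^sup>* t t' \<Longrightarrow> tj G t s n \<Longrightarrow> \<exists>n'\<le>n. tj G t' s n'"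
proof (induction arbitrary: n rule: rtranclp_induct)
  case base then show ?case by auto
next
  case (step y z)
  then obtain n' where "n' \<le> n" "tj G y s n'" by blast
  with reduce[OF step.hyps(2)] show ?case by (meson le_trans)
qed

lemma hnf_body_tj: "hnf_body t \<Longrightarrow> \<exists>G n. tj G t s n"
proof (induction arbitrary: s rule: hnf_body.induct)
  case (1 x) then show ?case by (auto intro: tj_tjs.tVar)
next
  case (2 c) then show ?case by (auto intro: tj_tjs.tConst)
next
  case (3 t u)
  from 3 obtain G n where "tj G t (Arr {#} s) n" by blast
  from tj_tjs.tApp[OF this tj_tjs.sNil[of u]] show ?case by auto
qed

lemma is_hnf_tj: "is_hnf t \<Longrightarrow> \<exists>G s n. tj G t s n"
proof (induction rule: is_hnf.induct)
  case (1 t) then show ?case using hnf_body_tj by blast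
next
  case (2 t) then show ?case by (auto intro: tj_tjs.tLam)
qed

lemma has_hnf_tj: "has_hnf t \<Longrightarrow> \<exists>G s n. tj G t s n"
proof -
  assume "has_hnf t"
  then obtain h where r: "beta_step\<^sup>*\<^sup>* t h" "is_hnf h" unfolding has_hnf_def by blast
  from r(1) show ?thesis
  proof (induction rule: converse_rtranclp_induct)
    case base then show ?case using is_hnf_tj[OF r(2)] .
  next
    case (step y z)
    then obtain G s n where "tj G z s n" by blast
    from expand[OF step.hyps(1) this] show ?case by blast
  qed
qed

lemma tjs_inf: "tjs D u N m \<Longrightarrow> (\<forall>G s n. n \<le> m \<longrightarrow> tj G u s n \<longrightarrow> (\<exists>n'. tj G u' s n')) \<Longrightarrow> \<exists>m'. tjs D u' N m'"
proof (induction D u N m rule: tj_tjs.inducts(2)[where ?P1.0="\<lambda>_ _ _ _. True"])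
  case (sNil u) then show ?case by (auto intro: tj_tjs.sNil)
next
  case (sCons G u t n D N m)
  have "n \<le> n + m" by simp
  with sCons.prems sCons.hyps(1) obtain n' where "tj G u' t n'" by blast
  moreover have "\<forall>G s na. na \<le> m \<longrightarrow> tj G u s na \<longrightarrow> (\<exists>a. tj G u' s a)"
  proof (intro allI impI)
    fix G' s' na assume "na \<le> m" "tj G' u s' na"
    moreover have "na \<le> n + m" using \<open>na \<le> m\<close> by simp
    ultimately show "\<exists>a. tj G' u' s' a" using sCons.prems by blast
  qed
  with sCons.IH obtain m' where "tjs D u' N m'" by blast
  ultimately show ?case by (auto intro: tj_tjs.sCons)
qed auto

lemma inf_tj: "inf_bb t u \<Longrightarrow> tj G t s n \<Longrightarrow> \<exists>n'. tj G u s n'"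
proof (induction n arbitrary: t u G s rule: less_induct)
  case (less n)
  from less.prems(1) show ?case
  proof (cases rule: inf_bb.cases)
    case (atom)
    from reduces[OF atom(2) less.prems(2)] show ?thesis by blast
  next
    case (app t1 t2 t1' t2')
    from reduces[OF app(2) less.prems(2)] obtain n' where "n' \<le> n" "tj G (App t1 t2) s n'" by blast
    then obtain G1 D N k m where h: "G = cadd G1 D" "tj G1 t1 (Arr N s) k" "tjs D t2 N m" "Suc (k + m) \<le> n"
      by (auto elim: tjAppE)
    from less.IH[OF _ app(3) h(2)] h(4) obtain k' where "tj G1 t1' (Arr N s) k'" by auto
    moreover have "\<exists>m'. tjs D t2' N m'"
    proof (rule tjs_inf[OF h(3)], intro allI impI)
      fix G' s' n'' assume "n'' \<le> m" "tj G' t2 s' n''"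
      moreover have "n'' < n" using \<open>n'' \<le> m\<close> h(4) by arith
      ultimately show "\<exists>n'. tj G' t2' s' n'" using less.IH app(4) by blast
    qed
    ultimately show ?thesis using h app(1) by (auto intro: tj_tjs.tApp)
  next
    case (lam r r')
    from reduces[OF lam(2) less.prems(2)] obtain n' where "n' \<le> n" "tj G (Lam r) s n'" by blast
    then obtain G1 s1 k where h: "G = ctail G1" "s = Arr (G1 0) s1" "tj G1 r s1 k" "Suc k \<le> n"
      by (auto elim: tjLamE)
    from less.IH[OF _ lam(3) h(3)] h(4) obtain k' where "tj G1 r' s1 k'" by auto
    then show ?thesis using h lam(1) by (auto intro: tj_tjs.tLam)
  qed
qed

theorem corollary5p31:
  fixes s t :: "'c lterm"
  assumes "\<not> has_hnf s" and "inf_bb t s"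
  shows "\<not> has_hnf t"
proof
  assume "has_hnf t"
  then obtain G \<sigma> n where "tj G t \<sigma> n" using has_hnf_tj by blast
  from inf_tj[OF assms(2) this] obtain n' where "tj G s \<sigma> n'" by blast
  then have "has_hnf s" by (rule tj_has_hnf)
  with assms(1) show False by blast
qed

end
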